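(* Let $P$ be a probability measure on a measurable space $(\Omega,\mathcal{M})$. Let $\Lambda:[0,\infty)\to[0,\infty]$ satisfy $\Lambda(0)=0$, be finite on a neighborhood of $0$, and be differentiable from the right at $0$ with right-derivative $\eta$. Then $$\mathcal{U}^\Lambda(P)\subset\{Q:\ R(Q\|P)\le\eta\}.$$
   Context: For probability measures $P,Q$ on $(\Omega,\mathcal{M})$, the relative entropy is $R(Q\|P)=\int\log(dQ/dP)\,dQ$ if $Q\ll P$ and $+\infty$ otherwise. For a probability measure $Q$ and a measurable $f:\Omega\to\overline{\mathbb{R}}$, the cumulant generating function is $\Lambda_Q^f(\lambda)=\log E_Q[e^{\lambda f}]$. For $\Lambda:[0,\infty)\to[0,\infty]$ with $\Lambda(0)=0$ and finite on a neighborhood of $0$, the ambiguity set is $\mathcal{U}^\Lambda(P)=\{Q \text{ probability measure}: Q\ll P,\ \Lambda_Q^{\log(dQ/dP)}(\lambda)\le\Lambda(\lambda)\ \text{for all }\lambda>0\}$. *)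

theory Defs
  imports "HOL-Probability.Probability"
begin

definition exp_ereal :: "ereal \<Rightarrow> ennreal" where
  "exp_ereal t = (case t of ereal r \<Rightarrow> ennreal (exp r) | PInfty \<Rightarrow> \<infinity> | MInfty \<Rightarrow> 0)"

definition ln_ennreal :: "ennreal \<Rightarrow> ereal" where
  "ln_ennreal e = (if e = 0 then -\<infinity> else if e = \<infinity> then \<infinity> else ereal (ln (enn2real e)))"

definition cgf :: "'a measure \<Rightarrow> ('a \<Rightarrow> ereal) \<Rightarrow> real \<Rightarrow> ereal" where
  "cgf Q f l = ln_ennreal (\<integral>\<^sup>+ x. exp_ereal (ereal l * f x) \<partial>Q)"

definition log_RN :: "'a measure \<Rightarrow> 'a measure \<Rightarrow> 'a \<Rightarrow> ereal" where
  "log_RN P Q x = ln_ennreal (RN_deriv P Q x)"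

definition abs_cont :: "'a measure \<Rightarrow> 'a measure \<Rightarrow> bool" where
  "abs_cont Q P \<longleftrightarrow> sets Q = sets P \<and> absolutely_continuous P Q"

text \<open>Relative entropy R(Q||P) = int log(dQ/dP) dQ if Q << P, +inf otherwise
  (integral of an extended-real function = positive part minus negative part).\<close>
definition rel_entropy :: "'a measure \<Rightarrow> 'a measure \<Rightarrow> ereal" where
  "rel_entropy Q P =
     (if abs_cont Q P then
        enn2ereal (\<integral>\<^sup>+ x. e2ennreal (max 0 (log_RN P Q x)) \<partial>Q)
        - enn2ereal (\<integral>\<^sup>+ x. e2ennreal (max 0 (- log_RN P Q x)) \<partial>Q)
      else \<infinity>)"

definition ambiguity_set :: "'a measure \<Rightarrow> (real \<Rightarrow> ennreal) \<Rightarrow> 'a measure set" where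
  "ambiguity_set P \<Lambda> = {Q. prob_space Q \<and> abs_cont Q P \<and>
      (\<forall>l>0. cgf Q (log_RN P Q) l \<le> enn2ereal (\<Lambda> l))}"

end

theory Submission imports Defs begin
lemma ln_ennreal_meas[measurable]: "ln_ennreal \<in> borel \<rightarrow>\<^sub>M borel"
  unfolding ln_ennreal_def[abs_def] by measurable
lemma exp_ereal_alt: "exp_ereal t = (if t = \<infinity> then \<infinity> else if t = -\<infinity> then 0 else ennreal (exp (real_of_ereal t)))"
  by (cases t) (auto simp: exp_ereal_def)
lemma exp_ereal_meas[measurable]: "exp_ereal \<in> borel \<rightarrow>\<^sub>M borel"
  unfolding exp_ereal_alt[abs_def] by measurable

lemma neg_part_bound: "p * e2ennreal (max 0 (- ln_ennreal p)) \<le> 1"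
proof (cases "p = 0 \<or> p = \<infinity>")
  case True thus ?thesis by (auto simp: ln_ennreal_def)
next
  case False
  then obtain r where r: "p = ennreal r" "r > 0" 
    by (cases p) (auto simp: less_le)
  have l: "ln_ennreal p = ereal (ln r)" using r False by (simp add: ln_ennreal_def)
  show ?thesis
  proof (cases "r \<le> 1")
    case True
    have "ln (1/r) \<le> 1/r - 1" using r by (intro ln_le_minus_one) auto
    hence "r * (- ln r) \<le> 1" using r by (simp add: ln_div field_simps)
    moreover have "- ln r \<ge> 0" using True r by simp
    ultimately show ?thesis using r l
      by (simp add: e2ennreal_ereal ennreal_mult'[symmetric] max_def ennreal_le_1)
  next
    case False
    hence "ln r > 0" by simp
    thus ?thesis using l by (simp add: max_def e2ennreal_neg)
  qed
qed

lemma pointwise: assumes "l > 0"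
  shows "1 + ennreal l * e2ennreal (max 0 t) \<le> exp_ereal (ereal l * t) + ennreal l * e2ennreal (max 0 (- t))"
proof (cases t)
  case (real r)
  have e: "1 + l * r \<le> exp (l * r)" using exp_ge_add_one_self[of "l*r"] by simp
  show ?thesis
  proof (cases "r \<ge> 0")
    case True
    hence "1 + ennreal l * e2ennreal (max 0 t) = ennreal (1 + l*r)"
      using real assms by (simp add: e2ennreal_ereal max_def ennreal_mult' ennreal_plus[symmetric])
    also have "\<dots> \<le> exp_ereal (ereal l * t)" using e real by (simp add: exp_ereal_def)
    finally show ?thesis by (meson add_increasing2 order.trans zero_le)
  next
    case False
    have "1 \<le> exp (l*r) + l * (-r)" using e by linarith
    hence "ennreal 1 \<le> ennreal (exp (l*r) + l * (-r))" by (rule ennreal_leI)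
    also have "\<dots> = ennreal (exp (l*r)) + ennreal l * ennreal (-r)"
      using False assms by (subst ennreal_plus) (auto simp: ennreal_mult[symmetric] mult_nonneg_nonpos)
    also have "\<dots> = exp_ereal (ereal l * t) + ennreal l * e2ennreal (max 0 (- t))"
      using real False assms by (simp add: exp_ereal_def e2ennreal_ereal max_def)
    finally show ?thesis using real False by (simp add: max_def e2ennreal_neg)
  qed
next
  case PInf thus ?thesis using assms by (simp add: exp_ereal_def)
next
  case MInf thus ?thesis using assms by (simp add: exp_ereal_def max_def ennreal_mult_top)
qed

lemma ln_bound: assumes "ln_ennreal E \<le> enn2ereal L" "L < \<infinity>"
  shows "E \<le> ennreal (exp (enn2real L))"
proof -
  consider "E = 0" | "E = \<infinity>" | r where "E = ennreal r" "r > 0"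
    by (cases E) (auto simp: less_le)
  thus ?thesis
  proof cases
    case 2 thus ?thesis using assms by (simp add: ln_ennreal_def)
  next
    case (3 r)
    obtain c where c: "L = ennreal c" "c \<ge> 0" using assms(2) by (cases L) auto
    have "ln r \<le> c" using assms(1) 3 c by (simp add: ln_ennreal_def)
    hence "r \<le> exp c" using 3 by (metis exp_le_cancel_iff exp_ln) 
    thus ?thesis using 3 c by simp
  qed simp
qed

theorem mainTheorem1:
  fixes P :: "'a measure" and \<Lambda> :: "real \<Rightarrow> ennreal" and \<eta> :: real
  assumes "prob_space P"
    and "\<Lambda> 0 = 0"
    and "\<exists>\<epsilon>>0. \<forall>t\<in>{0..<\<epsilon>}. \<Lambda> t < \<infinity>"
    and "((\<lambda>t. enn2real (\<Lambda> t)) has_real_derivative \<eta>) (at_right 0)"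
  shows "ambiguity_set P \<Lambda> \<subseteq> {Q. rel_entropy Q P \<le> ereal \<eta>}"
proof
  fix Q assume "Q \<in> ambiguity_set P \<Lambda>"
  hence Qp: "prob_space Q" and sQ: "sets Q = sets P" and ac: "absolutely_continuous P Q"
    and cg: "\<And>l. l > 0 \<Longrightarrow> cgf Q (log_RN P Q) l \<le> enn2ereal (\<Lambda> l)"
    by (auto simp: ambiguity_set_def abs_cont_def)
  obtain \<epsilon> where \<epsilon>: "\<epsilon> > 0" "\<And>t. 0 \<le> t \<Longrightarrow> t < \<epsilon> \<Longrightarrow> \<Lambda> t < \<infinity>" using assms(3) by auto
  define p where "p = RN_deriv P Q"
  define f where "f = (\<lambda>x. ln_ennreal (p x))"
  have pm[measurable]: "p \<in> borel_measurable P" unfolding p_def by simp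
  have fmP[measurable]: "f \<in> borel_measurable P" unfolding f_def by measurable
  have fm[measurable]: "f \<in> borel_measurable Q" by (subst measurable_cong_sets[OF sQ refl]) (rule fmP)
  have dens: "density P p = Q" unfolding p_def
    using sigma_finite_measure.density_RN_deriv[OF prob_space_imp_sigma_finite[OF assms(1)] ac sQ] .
  have lr: "log_RN P Q = f" by (simp add: f_def p_def log_RN_def[abs_def])
  define A where "A = (\<integral>\<^sup>+ x. e2ennreal (max 0 (f x)) \<partial>Q)"
  define B where "B = (\<integral>\<^sup>+ x. e2ennreal (max 0 (- f x)) \<partial>Q)"
  define E where "E = (\<lambda>l. \<integral>\<^sup>+ x. exp_ereal (ereal l * f x) \<partial>Q)"
  have "B = (\<integral>\<^sup>+ x. p x * e2ennreal (max 0 (- f x)) \<partial>P)"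
    unfolding B_def dens[symmetric] by (rule nn_integral_density) measurable
  also have "\<dots> \<le> (\<integral>\<^sup>+ x. 1 \<partial>P)" unfolding f_def
    by (intro nn_integral_mono neg_part_bound)
  also have "\<dots> = 1" using prob_space.emeasure_space_1[OF assms(1)] by simp
  finally have B1: "B \<le> 1" .
  have ineq: "1 + ennreal l * A \<le> E l + ennreal l * B" if "l > 0" for l
  proof -
    have "1 + ennreal l * A = (\<integral>\<^sup>+ x. 1 + ennreal l * e2ennreal (max 0 (f x)) \<partial>Q)"
      unfolding A_def
      by (subst nn_integral_add) (auto simp: nn_integral_cmult prob_space.emeasure_space_1[OF Qp])
    also have "\<dots> \<le> (\<integral>\<^sup>+ x. exp_ereal (ereal l * f x) + ennreal l * e2ennreal (max 0 (- f x)) \<partial>Q)"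
      by (intro nn_integral_mono pointwise that)
    also have "\<dots> = E l + ennreal l * B"
      unfolding E_def B_def by (subst nn_integral_add) (auto simp: nn_integral_cmult)
    finally show ?thesis .
  qed
  have Eb: "E l \<le> ennreal (exp (enn2real (\<Lambda> l)))" if "l > 0" "l < \<epsilon>" for l
    using cg[OF that(1)] \<epsilon>(2)[of l] that unfolding cgf_def lr E_def
    by (intro ln_bound) auto
  define l0 where "l0 = \<epsilon>/2"
  have l0: "l0 > 0" "l0 < \<epsilon>" using \<epsilon> by (auto simp: l0_def)
  have "1 + ennreal l0 * A < \<infinity>"
  proof -
    have "E l0 < \<infinity>" using Eb[OF l0] by (simp add: le_less_trans)
    moreover have "B < \<infinity>" using B1 by (simp add: le_less_trans)
    ultimately have "E l0 + ennreal l0 * B < \<infinity>" by (simp add: ennreal_mult_less_top)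
    thus ?thesis using ineq[OF l0(1)] by (rule le_less_trans[rotated])
  qed
  hence "A < \<infinity>" using l0 by (auto simp: ennreal_mult_less_top top.not_eq_extremum)
  then obtain a where a: "A = ennreal a" "a \<ge> 0" by (cases A) auto
  obtain b where b: "B = ennreal b" "b \<ge> 0" using B1 by (cases B) (auto simp: top_unique)
  have re: "rel_entropy Q P = ereal (a - b)"
    unfolding rel_entropy_def abs_cont_def using sQ ac a b
    by (simp add: lr A_def[symmetric] B_def[symmetric])
  define g where "g = (\<lambda>t. exp (enn2real (\<Lambda> t)))"
  have gd: "(g has_real_derivative \<eta>) (at_right 0)"
    unfolding g_def using DERIV_chain2[OF DERIV_exp assms(4)] assms(2) by simp
  hence lim: "((\<lambda>t. (g t - g 0) / (t - 0)) \<longlongrightarrow> \<eta>) (at_right 0)"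
    by (simp add: has_field_derivative_iff)
  have bound: "a - b \<le> (g t - g 0) / (t - 0)" if "t > 0" "t < \<epsilon>" for t
  proof -
    have "ennreal (1 + t * a) = 1 + ennreal t * A" using a that
      by (simp add: ennreal_mult' ennreal_plus[symmetric])
    also have "\<dots> \<le> E t + ennreal t * B" using ineq that by simp
    also have "\<dots> \<le> ennreal (g t) + ennreal t * B" using Eb[OF that] by (simp add: g_def add_right_mono)
    also have "\<dots> = ennreal (g t + t * b)" using b that
      by (simp add: ennreal_mult' ennreal_plus[symmetric] g_def)
    finally have "1 + t * a \<le> g t + t * b" using that
      using b by (subst (asm) ennreal_le_iff) (auto simp: g_def intro!: add_nonneg_nonneg)
    hence "t * (a - b) \<le> g t - g 0" using assms(2) by (simp add: g_def algebra_simps)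
    thus ?thesis using that by (simp add: field_simps)
  qed
  have "a - b \<le> \<eta>"
  proof (rule tendsto_lowerbound[OF lim])
    show "\<forall>\<^sub>F t in at_right 0. a - b \<le> (g t - g 0) / (t - 0)"
      unfolding eventually_at_right_field
    proof (intro exI conjI allI impI)
      show "(0::real) < \<epsilon>" by (rule \<epsilon>(1))
      fix y :: real assume "0 < y" "y < \<epsilon>"
      thus "a - b \<le> (g y - g 0) / (y - 0)" by (rule bound)
    qed
  qed (rule trivial_limit_at_right_real)
  hence "ereal (a - b) \<le> ereal \<eta>" by (simp only: ereal_less_eq)
  thus "Q \<in> {Q. rel_entropy Q P \<le> ereal \<eta>}" unfolding mem_Collect_eq re .
qed

end
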